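(* Let $m\ge 3$, $n\ge 2$, let $\mathcal{C}^3_{m,n}=(V_1,V_2,E)$, and let $e\in E$ be a hyperedge containing exactly two vertices of $V_1$ and one vertex of $V_2$. Then the Seidel spectrum of $\mathcal{C}^3_{m,n}-e$ consists of the eigenvalue $2n-1$ with multiplicity $m-3$, the eigenvalue $2m-1$ with multiplicity $n-2$, and the five roots $\tau_1,\dots,\tau_5$ of $\xi_2(\tau)=0$, where \begin{align*} \xi_2(\tau)={}&-\tau^5+(-5+5m+7n-4mn)\tau^4\\ &+(46+4m-8m^2+4n-22mn-6m^2n+4m^3n-18n^2+2mn^2+4m^2n^2+4mn^3)\tau^3\\ &+(286-206m+8m^2+4m^3-234n+62mn-10m^2n+40m^3n-8m^4n-46n^2-10mn^2\\ &\quad+64m^2n^2-24m^3n^2+36n^3+52mn^3-24m^2n^3-16mn^4)\tau^2\\ &+(83-228m-40m^2+40m^3+76n-90mn+246m^2n-28m^3n-16m^4n-366n^2+238mn^2\\ &\quad+132m^2n^2-160m^3n^2+32m^4n^2+248n^3+20mn^3-184m^2n^3+48m^3n^3-40n^4\\ &\quad-88mn^4+48m^2n^4+16mn^5)\tau\\ &+(-921+873m-408m^2+84m^3+2387n-2250mn+1274m^2n-368m^3n+24m^4n-2322n^2\\ &\quad+1994mn^2-680m^2n^2+40m^3n^2+32m^4n^2+1012n^3-732mn^3-160m^2n^3\\ &\quad+160m^3n^3-32m^4n^3-168n^4+72mn^4+160m^2n^4-32m^3n^4+16mn^5-32m^2n^5). \end{align*}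
   Context: For a hypergraph $\mathcal{H}$ and distinct vertices $i,j$, the co-degree $c_{ij}$ is the number of hyperedges containing both $i$ and $j$. The Seidel matrix $\mathcal{S}(\mathcal{H})$ has zero diagonal and $(i,j)$-entry $1-2c_{ij}$ for $i\neq j$; its eigenvalues (with multiplicity) form the Seidel spectrum of $\mathcal{H}$. The complete $3$-uniform bipartite hypergraph $\mathcal{C}^3_{m,n}=(V_1,V_2,E)$ has vertex set $V_1\sqcup V_2$, $|V_1|=m$, $|V_2|=n$, and $E$ = all $3$-subsets meeting both $V_1$ and $V_2$. For a hyperedge $e$, $\mathcal{H}-e$ denotes the hypergraph with the same vertex set and hyperedge set $E\setminus\{e\}$. *)

theory Defs
  imports "HOL-Computational_Algebra.Polynomial" "Jordan_Normal_Form.Char_Poly"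
begin

text \<open>Hypergraphs on the vertex set {0..<N}; a hypergraph is given by N and its set of hyperedges.\<close>

definition codegree :: "nat set set \<Rightarrow> nat \<Rightarrow> nat \<Rightarrow> nat" where
  "codegree E i j = card {e \<in> E. i \<in> e \<and> j \<in> e}"

definition seidel_matrix :: "nat \<Rightarrow> nat set set \<Rightarrow> real mat" where
  "seidel_matrix N E = mat N N (\<lambda>(i, j). if i = j then 0 else 1 - 2 * real (codegree E i j))"

definition seidel_spectrum :: "nat \<Rightarrow> nat set set \<Rightarrow> complex multiset" where
  "seidel_spectrum N E = proots (char_poly (map_mat complex_of_real (seidel_matrix N E)))"

definition V1 :: "nat \<Rightarrow> nat set" where "V1 m = {0..<m}"
definition V2 :: "nat \<Rightarrow> nat \<Rightarrow> nat set" where "V2 m n = {m..<m+n}"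

definition complete_bip3 :: "nat \<Rightarrow> nat \<Rightarrow> nat set set" where
  "complete_bip3 m n = {e. e \<subseteq> V1 m \<union> V2 m n \<and> card e = 3 \<and> e \<inter> V1 m \<noteq> {} \<and> e \<inter> V2 m n \<noteq> {}}"

definition xi2 :: "nat \<Rightarrow> nat \<Rightarrow> complex poly" where
  "xi2 m' n' = (let m = int m'; n = int n' in
    map_poly of_int
    [: -921+873*m-408*m^2+84*m^3+2387*n-2250*m*n+1274*m^2*n-368*m^3*n+24*m^4*n-2322*n^2
        +1994*m*n^2-680*m^2*n^2+40*m^3*n^2+32*m^4*n^2+1012*n^3-732*m*n^3-160*m^2*n^3
        +160*m^3*n^3-32*m^4*n^3-168*n^4+72*m*n^4+160*m^2*n^4-32*m^3*n^4+16*m*n^5-32*m^2*n^5,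
       83-228*m-40*m^2+40*m^3+76*n-90*m*n+246*m^2*n-28*m^3*n-16*m^4*n-366*n^2+238*m*n^2
        +132*m^2*n^2-160*m^3*n^2+32*m^4*n^2+248*n^3+20*m*n^3-184*m^2*n^3+48*m^3*n^3-40*n^4
        -88*m*n^4+48*m^2*n^4+16*m*n^5,
       286-206*m+8*m^2+4*m^3-234*n+62*m*n-10*m^2*n+40*m^3*n-8*m^4*n-46*n^2-10*m*n^2
        +64*m^2*n^2-24*m^3*n^2+36*n^3+52*m*n^3-24*m^2*n^3-16*m*n^4,
       46+4*m-8*m^2+4*n-22*m*n-6*m^2*n+4*m^3*n-18*n^2+2*m*n^2+4*m^2*n^2+4*m*n^3,
       -5+5*m+7*n-4*m*n,
       -1 :])"

end

theory Submission
  imports Defs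
begin


lemma det_block_formula:
  fixes cls :: "nat \<Rightarrow> nat" and d :: "nat \<Rightarrow> complex" and \<beta> :: "nat \<Rightarrow> nat \<Rightarrow> complex"
  assumes cls: "\<And>i. i < N \<Longrightarrow> cls i < r" and dx: "\<And>k. k < r \<Longrightarrow> x \<noteq> d k"
  shows "det (mat N N (\<lambda>(i,j). (if i = j then x - d (cls i) else 0) - \<beta> (cls i) (cls j)))
        = (\<Prod>i<N. (x - d (cls i))) * det (mat r r (\<lambda>(k,l). (if k = l then 1 else 0)
             - \<beta> k l * of_nat (card {j. j<N \<and> cls j = l}) / (x - d l)))"
proof -
  define U where "U = mat N r (\<lambda>(i,k). if cls i = k then (1::complex) else 0)"
  define Y where "Y = mat r N (\<lambda>(k,j). \<beta> k (cls j))"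
  define D where "D = mat N N (\<lambda>(i,j). if i=j then x - d(cls i) else 0)"
  define E where "E = mat N N (\<lambda>(i,j). if i=j then 1/(x - d(cls i)) else 0)"
  have U: "U \<in> carrier_mat N r" and Y: "Y \<in> carrier_mat r N" and D: "D \<in> carrier_mat N N"
    and E: "E \<in> carrier_mat N N" by (auto simp: U_def Y_def D_def E_def)
  have UY: "U * Y = mat N N (\<lambda>(i,j). \<beta> (cls i) (cls j))"
  proof (rule eq_matI)
    fix i j assume i: "i < dim_row (mat N N (\<lambda>(i,j). \<beta> (cls i) (cls j)))" and j: "j < dim_col (mat N N (\<lambda>(i,j). \<beta> (cls i) (cls j)))"
    have "(\<Sum>k = 0..<r. (if cls i = k then 1 else 0) * \<beta> k (cls j)) = (\<Sum>k = 0..<r. (if cls i = k then \<beta> k (cls j) else 0))"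
      by (rule sum.cong) auto
    also have "\<dots> = \<beta> (cls i) (cls j)" using cls[of i] i by (simp add: sum.delta)
    finally have "(U*Y) $$ (i,j) = \<beta> (cls i) (cls j)" using i j by (simp add: U_def Y_def scalar_prod_def)
    then show "(U*Y) $$ (i,j) = mat N N (\<lambda>(i,j). \<beta> (cls i) (cls j)) $$ (i,j)" using i j by simp
  qed (auto simp: U_def Y_def)
  have M: "mat N N (\<lambda>(i,j). (if i = j then x - d (cls i) else 0) - \<beta> (cls i) (cls j)) = D - U * Y"
    unfolding UY by (rule eq_matI) (auto simp: D_def)
  define L1 where "L1 = four_block_mat (1\<^sub>m N) (0\<^sub>m N r) (-Y) (1\<^sub>m r)"
  define B where "B = four_block_mat D U Y (1\<^sub>m r)"
  have B: "B \<in> carrier_mat (N+r) (N+r)" unfolding B_def using U Y D by auto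
  have L1: "L1 \<in> carrier_mat (N+r) (N+r)" unfolding L1_def using U Y D by auto
  have "B * L1 = four_block_mat (D*1\<^sub>m N + U*(-Y)) (D*0\<^sub>m N r + U*1\<^sub>m r) (Y*1\<^sub>m N + 1\<^sub>m r*(-Y)) (Y*0\<^sub>m N r + 1\<^sub>m r*1\<^sub>m r)"
    unfolding B_def L1_def by (rule mult_four_block_mat[OF D U Y one_carrier_mat one_carrier_mat zero_carrier_mat uminus_carrier_mat[OF Y] one_carrier_mat])
  also have "\<dots> = four_block_mat (D - U*Y) U (0\<^sub>m r N) (1\<^sub>m r)"
  proof -
    have 1: "D*1\<^sub>m N + U*(-Y) = D - U*Y" by (rule eq_matI) (use D U Y in auto)
    have 2: "D*0\<^sub>m N r + U*1\<^sub>m r = U" by (rule eq_matI) (use D U Y in auto)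
    have 3: "Y*1\<^sub>m N + 1\<^sub>m r*(-Y) = 0\<^sub>m r N" by (rule eq_matI) (use D U Y in auto)
    have 4: "Y*0\<^sub>m N r + 1\<^sub>m r*1\<^sub>m r = 1\<^sub>m r" by (rule eq_matI) (use D U Y in auto)
    show ?thesis unfolding 1 2 3 4 ..
  qed
  finally have BL1: "B * L1 = four_block_mat (D - U*Y) U (0\<^sub>m r N) (1\<^sub>m r)" .
  have dL1: "det L1 = 1" unfolding L1_def
    by (subst det_four_block_mat_upper_right_zero[of _ N _ r]) (use Y in auto)
  have dBL1: "det (B * L1) = det (D - U*Y)" unfolding BL1
    by (subst det_four_block_mat_lower_left_zero[of _ N _ r]) (use Y U D in auto)
  have detB1: "det B = det (D - U*Y)" using det_mult[OF B L1] dL1 dBL1 by simp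
  have ED: "E * D = 1\<^sub>m N"
  proof (rule eq_matI)
    fix i j assume i: "i < dim_row (1\<^sub>m N :: complex mat)" and j: "j < dim_col (1\<^sub>m N :: complex mat)"
    have "(E*D) $$ (i,j) = (\<Sum>k = 0..<N. (if i = k then 1/(x - d(cls i)) else 0) * (if k = j then x - d(cls k) else 0))"
      using i j by (simp add: E_def D_def scalar_prod_def)
    also have "\<dots> = (\<Sum>k = 0..<N. (if k = i then (if i = j then 1 else 0) else 0))"
      using dx[OF cls[of i]] i by (intro sum.cong) auto
    also have "\<dots> = 1\<^sub>m N $$ (i,j)" using i j by simp
    finally show "(E*D) $$ (i,j) = 1\<^sub>m N $$ (i,j)" .
  qed (auto simp: E_def D_def)
  have YED: "Y * E * D = Y" using Y E D ED by simp
  define L2 where "L2 = four_block_mat (1\<^sub>m N) (0\<^sub>m N r) (-(Y*E)) (1\<^sub>m r)"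
  have YE: "Y * E \<in> carrier_mat r N" using Y E by simp
  have L2: "L2 \<in> carrier_mat (N+r) (N+r)" unfolding L2_def using YE by auto
  have "L2 * B = four_block_mat (1\<^sub>m N * D + 0\<^sub>m N r * Y) (1\<^sub>m N * U + 0\<^sub>m N r * 1\<^sub>m r) (-(Y*E) * D + 1\<^sub>m r * Y) (-(Y*E) * U + 1\<^sub>m r * 1\<^sub>m r)"
    unfolding B_def L2_def by (rule mult_four_block_mat[OF one_carrier_mat zero_carrier_mat uminus_carrier_mat[OF YE] one_carrier_mat D U Y one_carrier_mat])
  also have "\<dots> = four_block_mat D U (0\<^sub>m r N) (1\<^sub>m r - Y * E * U)"
  proof -
    have 1: "1\<^sub>m N * D + 0\<^sub>m N r * Y = D" by (rule eq_matI) (use D U Y in auto)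
    have 2: "1\<^sub>m N * U + 0\<^sub>m N r * 1\<^sub>m r = U" by (rule eq_matI) (use D U Y in auto)
    have 3: "-(Y*E) * D + 1\<^sub>m r * Y = 0\<^sub>m r N"
    proof -
      have dd: "dim_col (Y*E) = dim_row D" using E D by simp
      have "-(Y*E) * D = - (Y*E*D)" by (rule uminus_mult_left_mat[OF dd])
      also have "\<dots> = - Y" by (simp only: YED)
      finally have "-(Y*E) * D = - Y" .
      thus ?thesis by (intro eq_matI) (use Y in auto)
    qed
    have 4: "-(Y*E) * U + 1\<^sub>m r * 1\<^sub>m r = 1\<^sub>m r - Y * E * U" by (rule eq_matI) (use D U Y E in auto)
    show ?thesis unfolding 1 2 3 4 ..
  qed
  finally have L2B: "L2 * B = four_block_mat D U (0\<^sub>m r N) (1\<^sub>m r - Y * E * U)" .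
  have dL2: "det L2 = 1" unfolding L2_def
    by (subst det_four_block_mat_upper_right_zero[of _ N _ r]) (use YE in auto)
  have dL2B: "det (L2 * B) = det D * det (1\<^sub>m r - Y * E * U)" unfolding L2B
    by (subst det_four_block_mat_lower_left_zero[of _ N _ r]) (use Y U D E in auto)
  have detB2: "det B = det D * det (1\<^sub>m r - Y * E * U)" using det_mult[OF L2 B] dL2 dL2B by simp
  have detD: "det D = (\<Prod>i<N. (x - d (cls i)))"
    by (subst det_upper_triangular[OF _ D]) (auto simp: D_def prod_list_diag_prod atLeast0LessThan)
  have YE': "Y * E = mat r N (\<lambda>(k,j). \<beta> k (cls j) / (x - d (cls j)))"
  proof (rule eq_matI)
    fix k j assume k: "k < dim_row (mat r N (\<lambda>(k,j). \<beta> k (cls j) / (x - d (cls j))))"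
      and j: "j < dim_col (mat r N (\<lambda>(k,j). \<beta> k (cls j) / (x - d (cls j))))"
    have "(Y*E) $$ (k,j) = (\<Sum>i = 0..<N. \<beta> k (cls i) * (if i = j then 1/(x - d(cls i)) else 0))"
      using k j by (simp add: E_def Y_def scalar_prod_def)
    also have "\<dots> = (\<Sum>i = 0..<N. (if i = j then \<beta> k (cls j) / (x - d (cls j)) else 0))"
      by (intro sum.cong) auto
    also have "\<dots> = \<beta> k (cls j) / (x - d (cls j))" using j by simp
    finally show "(Y*E) $$ (k,j) = mat r N (\<lambda>(k,j). \<beta> k (cls j) / (x - d (cls j))) $$ (k,j)" using k j by simp
  qed (auto simp: E_def Y_def)
  have YEU: "1\<^sub>m r - Y * E * U = mat r r (\<lambda>(k,l). (if k = l then 1 else 0)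
             - \<beta> k l * of_nat (card {j. j<N \<and> cls j = l}) / (x - d l))"
  proof (rule eq_matI)
    fix k l assume k: "k < dim_row (mat r r (\<lambda>(k,l). (if k = l then 1 else 0)
             - \<beta> k l * of_nat (card {j. j<N \<and> cls j = l}) / (x - d l)))"
      and l: "l < dim_col (mat r r (\<lambda>(k,l). (if k = l then 1 else (0::complex))
             - \<beta> k l * of_nat (card {j. j<N \<and> cls j = l}) / (x - d l)))"
    have "(Y*E*U) $$ (k,l) = (\<Sum>j = 0..<N. \<beta> k (cls j) / (x - d (cls j)) * (if cls j = l then 1 else 0))"
      using k l by (simp add: YE' U_def scalar_prod_def)
    also have "\<dots> = (\<Sum>j = 0..<N. (if cls j = l then \<beta> k l / (x - d l) else 0))"
      by (intro sum.cong) auto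
    also have "\<dots> = (\<Sum>j \<in> {j \<in> {0..<N}. cls j = l}. \<beta> k l / (x - d l))"
      by (rule sum.inter_filter[symmetric]) simp
    also have "{j \<in> {0..<N}. cls j = l} = {j. j<N \<and> cls j = l}" by auto
    also have "(\<Sum>j \<in> {j. j<N \<and> cls j = l}. \<beta> k l / (x - d l)) = \<beta> k l * of_nat (card {j. j<N \<and> cls j = l}) / (x - d l)"
      by simp
    finally show "(1\<^sub>m r - Y * E * U) $$ (k,l) = mat r r (\<lambda>(k,l). (if k = l then 1 else 0)
             - \<beta> k l * of_nat (card {j. j<N \<and> cls j = l}) / (x - d l)) $$ (k,l)"
      using k l YE U Y by simp
  qed (use YE U in auto)
  show ?thesis using detB1 detB2 detD YEU M by simp
qed

lemma char_poly_block_eval: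
  fixes cls :: "nat \<Rightarrow> nat" and d :: "nat \<Rightarrow> complex" and \<beta> :: "nat \<Rightarrow> nat \<Rightarrow> complex"
  assumes cls: "\<And>i. i < N \<Longrightarrow> cls i < r" and dx: "\<And>k. k < r \<Longrightarrow> x \<noteq> d k"
    and s: "\<And>k. k < r \<Longrightarrow> card {j. j<N \<and> cls j = k} \<ge> 1"
  shows "poly (char_poly (mat N N (\<lambda>(i,j). (if i = j then d (cls i) else 0) + \<beta> (cls i) (cls j)))) x
        = (\<Prod>k<r. (x - d k) ^ (card {j. j<N \<and> cls j = k} - 1)) * det (mat r r (\<lambda>(k,l). (if k = l then x - d k else 0)
             - \<beta> k l * of_nat (card {j. j<N \<and> cls j = l})))"
proof -
  define sz where "sz k = card {j. j<N \<and> cls j = k}" for k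
  let ?A = "mat N N (\<lambda>(i,j). (if i = j then d (cls i) else 0) + \<beta> (cls i) (cls j))"
  have A: "?A \<in> carrier_mat N N" by simp
  have 1: "- char_matrix ?A x = mat N N (\<lambda>(i,j). (if i = j then x - d (cls i) else 0) - \<beta> (cls i) (cls j))"
    by (rule eq_matI) (auto simp: char_matrix_def)
  have "poly (char_poly ?A) x = det (- char_matrix ?A x)" by (rule char_poly_matrix[OF A])
  also have "\<dots> = (\<Prod>i<N. (x - d (cls i))) * det (mat r r (\<lambda>(k,l). (if k = l then 1 else 0)
             - \<beta> k l * of_nat (sz l) / (x - d l)))"
    unfolding 1 sz_def by (rule det_block_formula[OF cls dx])
  also have "(\<Prod>i<N. (x - d (cls i))) = (\<Prod>k<r. (\<Prod>i\<in>{i. i \<in> {..<N} \<and> cls i = k}. (x - d (cls i))))"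
    by (rule prod.group[symmetric]) (use cls in auto)
  also have "\<dots> = (\<Prod>k<r. (x - d k) ^ sz k)"
    by (intro prod.cong) (auto simp: sz_def)
  also have "\<dots> = (\<Prod>k<r. (x - d k) ^ (sz k - 1)) * (\<Prod>k<r. (x - d k))"
    unfolding prod.distrib[symmetric]
  proof (intro prod.cong refl)
    fix k assume "k \<in> {..<r}"
    then have "sz k = Suc (sz k - 1)" using s[of k] by (auto simp: sz_def)
    then show "(x - d k) ^ sz k = (x - d k) ^ (sz k - 1) * (x - d k)"
      by (metis power_Suc2)
  qed
  also have "(\<Prod>k<r. (x - d k)) = det (mat r r (\<lambda>(k,l). if k = l then x - d k else 0))"
    by (subst det_upper_triangular[of _ r]) (auto simp: prod_list_diag_prod atLeast0LessThan)
  also have "(\<Prod>k<r. (x - d k) ^ (sz k - 1)) * det (mat r r (\<lambda>(k,l). if k = l then x - d k else 0)) *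
    det (mat r r (\<lambda>(k,l). (if k = l then 1 else 0) - \<beta> k l * of_nat (sz l) / (x - d l)))
    = (\<Prod>k<r. (x - d k) ^ (sz k - 1)) * det (mat r r (\<lambda>(k,l). (if k = l then 1 else 0) - \<beta> k l * of_nat (sz l) / (x - d l))
         * mat r r (\<lambda>(k,l). if k = l then x - d k else 0))"
    by (subst det_mult[of _ r]) auto
  also have "mat r r (\<lambda>(k,l). (if k = l then 1 else 0) - \<beta> k l * of_nat (sz l) / (x - d l))
         * mat r r (\<lambda>(k,l). if k = l then x - d k else 0) = mat r r (\<lambda>(k,l). (if k = l then x - d k else 0)
             - \<beta> k l * of_nat (sz l))"
  proof (rule eq_matI)
    fix k l assume k: "k < dim_row (mat r r (\<lambda>(k,l). (if k = l then x - d k else 0) - \<beta> k l * of_nat (sz l)))"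
      and l: "l < dim_col (mat r r (\<lambda>(k,l). (if k = l then x - d k else 0) - \<beta> k l * of_nat (sz l)))"
    have "(mat r r (\<lambda>(k,l). (if k = l then 1 else 0) - \<beta> k l * of_nat (sz l) / (x - d l))
         * mat r r (\<lambda>(k,l). if k = l then x - d k else 0)) $$ (k,l)
      = (\<Sum>i = 0..<r. ((if k = i then 1 else 0) - \<beta> k i * of_nat (sz i) / (x - d i)) * (if i = l then x - d i else 0))"
      using k l by (simp add: scalar_prod_def)
    also have "\<dots> = (\<Sum>i = 0..<r. if i = l then ((if k = l then x - d k else 0) - \<beta> k l * of_nat (sz l)) else 0)"
      using dx[of l] l by (intro sum.cong) (auto simp: field_simps)
    also have "\<dots> = (if k = l then x - d k else 0) - \<beta> k l * of_nat (sz l)" using l by simp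
    finally show "(mat r r (\<lambda>(k,l). (if k = l then 1 else 0) - \<beta> k l * of_nat (sz l) / (x - d l))
         * mat r r (\<lambda>(k,l). if k = l then x - d k else 0)) $$ (k,l) = 
       mat r r (\<lambda>(k,l). (if k = l then x - d k else 0) - \<beta> k l * of_nat (sz l)) $$ (k,l)" using k l by simp
  qed auto
  finally show ?thesis unfolding sz_def by (simp add: mult.assoc)
qed



lemma det2: assumes "A \<in> carrier_mat 2 2"
  shows "det A = A$$(0,0)*A$$(1,1) - A$$(0,1)*A$$(1,0)"
proof -
  have "det A = (\<Sum>j<2. A $$ (0,j) * cofactor A 0 j)" by (rule laplace_expansion_row[OF assms]) simp
  also have "\<dots> = A$$(0,0)*A$$(1,1) - A$$(0,1)*A$$(1,0)"
    using assms by (simp add: cofactor_def mat_delete_def numeral_2_eq_2 det_single lessThan_Suc)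
  finally show ?thesis .
qed

lemma det3: assumes "A \<in> carrier_mat 3 3"
  shows "det A = A$$(0,0)*(A$$(1,1)*A$$(2,2) - A$$(1,2)*A$$(2,1))
               - A$$(0,1)*(A$$(1,0)*A$$(2,2) - A$$(1,2)*A$$(2,0))
               + A$$(0,2)*(A$$(1,0)*A$$(2,1) - A$$(1,1)*A$$(2,0))"
proof -
  have c: "\<And>j. mat_delete A 0 j \<in> carrier_mat 2 2" using mat_delete_carrier[OF assms] by simp
  have "det A = (\<Sum>j<3. A $$ (0,j) * cofactor A 0 j)" by (rule laplace_expansion_row[OF assms]) simp
  also have "\<dots> = A $$ (0,0) * cofactor A 0 0 + A $$ (0,1) * cofactor A 0 1 + A $$ (0,2) * cofactor A 0 2"
    by (simp add: numeral_3_eq_3 numeral_2_eq_2 lessThan_Suc)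
  finally show ?thesis unfolding cofactor_def det2[OF c] using assms by (simp add: mat_delete_def algebra_simps numeral_3_eq_3 numeral_2_eq_2 eval_nat_numeral)
qed

lemma det4: assumes "A \<in> carrier_mat 4 4"
  shows "det A = A$$(0,0)*(A$$(1,1)*(A$$(2,2)*A$$(3,3) - A$$(2,3)*A$$(3,2))
               - A$$(1,2)*(A$$(2,1)*A$$(3,3) - A$$(2,3)*A$$(3,1))
               + A$$(1,3)*(A$$(2,1)*A$$(3,2) - A$$(2,2)*A$$(3,1)))
             - A$$(0,1)*(A$$(1,0)*(A$$(2,2)*A$$(3,3) - A$$(2,3)*A$$(3,2))
               - A$$(1,2)*(A$$(2,0)*A$$(3,3) - A$$(2,3)*A$$(3,0))
               + A$$(1,3)*(A$$(2,0)*A$$(3,2) - A$$(2,2)*A$$(3,0)))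
             + A$$(0,2)*(A$$(1,0)*(A$$(2,1)*A$$(3,3) - A$$(2,3)*A$$(3,1))
               - A$$(1,1)*(A$$(2,0)*A$$(3,3) - A$$(2,3)*A$$(3,0))
               + A$$(1,3)*(A$$(2,0)*A$$(3,1) - A$$(2,1)*A$$(3,0)))
             - A$$(0,3)*(A$$(1,0)*(A$$(2,1)*A$$(3,2) - A$$(2,2)*A$$(3,1))
               - A$$(1,1)*(A$$(2,0)*A$$(3,2) - A$$(2,2)*A$$(3,0))
               + A$$(1,2)*(A$$(2,0)*A$$(3,1) - A$$(2,1)*A$$(3,0)))"
proof -
  have c: "\<And>j. mat_delete A 0 j \<in> carrier_mat 3 3" using mat_delete_carrier[OF assms] by simp
  have "det A = (\<Sum>j<4. A $$ (0,j) * cofactor A 0 j)" by (rule laplace_expansion_row[OF assms]) simp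
  also have "\<dots> = A $$ (0,0) * cofactor A 0 0 + A $$ (0,1) * cofactor A 0 1 + A $$ (0,2) * cofactor A 0 2 + A $$ (0,3) * cofactor A 0 3"
    by (simp add: eval_nat_numeral numeral_3_eq_3 numeral_2_eq_2 lessThan_Suc)
  finally show ?thesis unfolding cofactor_def det3[OF c] using assms by (simp add: mat_delete_def algebra_simps numeral_3_eq_3 numeral_2_eq_2 eval_nat_numeral)
qed

definition dd :: "nat \<Rightarrow> nat \<Rightarrow> nat \<Rightarrow> complex" where
  "dd m n k = (if k = 0 then 2*of_nat n - 3 else if k = 1 then 2*of_nat n - 1 else if k = 2 then 0 else 2*of_nat m - 1)"
definition bb :: "nat \<Rightarrow> nat \<Rightarrow> nat \<Rightarrow> nat \<Rightarrow> complex" where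
  "bb m n k l = (if k = l then - dd m n k
    else if k + l = 1 then 1-2*of_nat n
    else if k + l = 2 then 7-2*of_nat m-2*of_nat n
    else if k + l = 5 then 1-2*of_nat m
    else 5-2*of_nat m-2*of_nat n)"
definition ss :: "nat \<Rightarrow> nat \<Rightarrow> nat \<Rightarrow> nat" where
  "ss m n k = (if k = 0 then 2 else if k = 1 then m - 2 else if k = 2 then 1 else if k = 3 then n - 1 else 0)"

lemma coeff_xi2: "coeff (xi2 m n) 5 = -1"
  by (simp add: xi2_def Let_def eval_nat_numeral)

lemma xi2_nz: "xi2 m n \<noteq> 0"
  using coeff_xi2[of m n] by auto

lemma xi2_identity: assumes "m \<ge> 2" "n \<ge> 1"
  shows "(x - dd m n 0) * det (mat 4 4 (\<lambda>(k,l). (if k = l then x - dd m n k else 0) - bb m n k l * of_nat (ss m n l)))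
     = - poly (xi2 m n) x"
proof -
  have "of_nat (m - 2) = (of_nat m - 2 :: complex)" "of_nat (n - 1) = (of_nat n - 1 :: complex)"
    using assms by (auto simp: of_nat_diff)
  then show ?thesis
    apply (subst det4[of _ ], simp)
    apply (simp add: dd_def bb_def ss_def xi2_def Let_def)
    apply (simp add: algebra_simps power2_eq_square power3_eq_cube eval_nat_numeral)
    done
qed



lemma triple_form:
  assumes "card f = 3" "i \<in> f" "j \<in> f" "i \<noteq> j"
  shows "\<exists>k. k \<noteq> i \<and> k \<noteq> j \<and> f = {i,j,k}"
proof -
  have fin: "finite f" using assms(1) by (metis card.infinite zero_neq_numeral)
  have "card (f - {i,j}) = 1" using assms fin by (simp add: card_Diff_subset)
  then obtain k where k: "f - {i,j} = {k}" by (auto simp: card_Suc_eq)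
  then have "f = {i,j,k}" using assms by auto
  with k show ?thesis by auto
qed

lemma codeg_complete:
  assumes ij: "i \<noteq> j" "i < m+n" "j < m+n"
  shows "codegree (complete_bip3 m n) i j = (if i < m \<and> j < m then n else if m \<le> i \<and> m \<le> j then m else m + n - 2)"
proof -
  define K where "K = {k. k < m+n \<and> k \<noteq> i \<and> k \<noteq> j \<and> (i<m \<and> j<m \<longrightarrow> m \<le> k) \<and> (m\<le>i \<and> m\<le>j \<longrightarrow> k<m)}"
  have V: "V1 m \<union> V2 m n = {0..<m+n}" by (auto simp: V1_def V2_def)
  have eq: "{f \<in> complete_bip3 m n. i \<in> f \<and> j \<in> f} = (\<lambda>k. {i,j,k}) ` K"
  proof (intro equalityI subsetI)
    fix f assume f: "f \<in> {f \<in> complete_bip3 m n. i \<in> f \<and> j \<in> f}"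
    have f3: "card f = 3" and fV: "f \<subseteq> {0..<m+n}" and f1: "f \<inter> V1 m \<noteq> {}" and f2: "f \<inter> V2 m n \<noteq> {}"
      and fi: "i \<in> f" and fj: "j \<in> f" using f unfolding complete_bip3_def V by blast+
    obtain k where k: "k \<noteq> i" "k \<noteq> j" "f = {i,j,k}" using triple_form[OF f3 fi fj ij(1)] by blast
    obtain y1 where y1: "y1 \<in> f" "y1 < m" using f1 unfolding V1_def by auto
    obtain y2 where y2: "y2 \<in> f" "m \<le> y2" using f2 unfolding V2_def by auto
    have "k < m+n" using fV k(3) by auto
    moreover have "i<m \<and> j<m \<longrightarrow> m \<le> k" using y2 k(3) by auto
    moreover have "m\<le>i \<and> m\<le>j \<longrightarrow> k<m" using y1 k(3) by auto
    ultimately have "k \<in> K" using k unfolding K_def by blast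
    then show "f \<in> (\<lambda>k. {i,j,k}) ` K" using k(3) by blast
  next
    fix f assume "f \<in> (\<lambda>k. {i,j,k}) ` K"
    then obtain k where k: "k \<in> K" "f = {i,j,k}" by blast
    have kk: "k < m+n" "k \<noteq> i" "k \<noteq> j" "i<m \<and> j<m \<longrightarrow> m \<le> k" "m\<le>i \<and> m\<le>j \<longrightarrow> k<m"
      using k(1) unfolding K_def by auto
    have "card f = 3" using k(2) kk ij(1) by simp
    moreover have "f \<subseteq> V1 m \<union> V2 m n" unfolding V using k(2) kk ij by auto
    moreover have "f \<inter> V1 m \<noteq> {}"
    proof (cases "i < m")
      case True then show ?thesis using k(2) unfolding V1_def by auto
    next
      case False
      then show ?thesis
      proof (cases "j < m")
        case True then show ?thesis using k(2) unfolding V1_def by auto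
      next
        case False then have "k < m" using kk \<open>\<not> i < m\<close> by auto
        then show ?thesis using k(2) unfolding V1_def by auto
      qed
    qed
    moreover have "f \<inter> V2 m n \<noteq> {}"
    proof (cases "m \<le> i")
      case True then show ?thesis using k(2) ij unfolding V2_def by auto
    next
      case False
      then show ?thesis
      proof (cases "m \<le> j")
        case True then show ?thesis using k(2) ij unfolding V2_def by auto
      next
        case False then have "m \<le> k" using kk \<open>\<not> m \<le> i\<close> by auto
        then show ?thesis using k(2) kk unfolding V2_def by auto
      qed
    qed
    ultimately show "f \<in> {f \<in> complete_bip3 m n. i \<in> f \<and> j \<in> f}"
      using k(2) unfolding complete_bip3_def by auto
  qed
  have inj: "inj_on (\<lambda>k. {i,j,k}) K"
  proof (rule inj_onI)
    fix k k' assume kk: "k \<in> K" "k' \<in> K" "{i,j,k} = {i,j,k'}"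
    then have "k \<in> {i,j,k'}" by blast
    then show "k = k'" using kk(1) unfolding K_def by blast
  qed
  have "codegree (complete_bip3 m n) i j = card K"
    unfolding codegree_def eq by (rule card_image[OF inj])
  also have "card K = (if i < m \<and> j < m then n else if m \<le> i \<and> m \<le> j then m else m + n - 2)"
  proof -
    consider "i < m \<and> j < m" | "m \<le> i \<and> m \<le> j" | "\<not>(i < m \<and> j < m) \<and> \<not>(m \<le> i \<and> m \<le> j)" by linarith
    then show ?thesis
    proof cases
      case 1
      then have "K = {m..<m+n}" unfolding K_def by auto
      then show ?thesis using 1 by simp
    next
      case 2
      then have "K = {0..<m}" unfolding K_def using ij by auto
      then show ?thesis using 2 by simp
    next
      case 3
      then have "K = {0..<m+n} - {i,j}" unfolding K_def using ij by auto
      then have "card K = m + n - 2" using ij by (simp add: card_Diff_subset)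
      then show ?thesis using 3 by auto
    qed
  qed
  finally show ?thesis .
qed

lemma codeg_minus:
  assumes "finite E" "e \<in> E"
  shows "codegree (E - {e}) i j = codegree E i j - (if i \<in> e \<and> j \<in> e then 1 else 0)"
proof -
  have "{f \<in> E - {e}. i \<in> f \<and> j \<in> f} = {f \<in> E. i \<in> f \<and> j \<in> f} - {e}" by blast
  moreover have "finite {f \<in> E. i \<in> f \<and> j \<in> f}" using assms(1) by simp
  ultimately show ?thesis using assms(2) unfolding codegree_def by (auto simp: card_Diff_singleton)
qed

lemma finite_bip3: "finite (complete_bip3 m n)"
proof -
  have "complete_bip3 m n \<subseteq> Pow (V1 m \<union> V2 m n)" unfolding complete_bip3_def by auto
  moreover have "finite (Pow (V1 m \<union> V2 m n))" by (simp add: V1_def V2_def)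
  ultimately show ?thesis by (rule finite_subset)
qed

lemma entry_arith:
  fixes p q :: nat
  assumes "p < 4" "q < 4" "\<not>(p = 2 \<and> q = 2)" "m \<ge> 3" "n \<ge> 2"
  shows "complex_of_real (1 - 2 * (real (if p \<le> 1 \<and> q \<le> 1 then n else if 2 \<le> p \<and> 2 \<le> q then m else m+n-2)
            - (if (p=0 \<or> p=2) \<and> (q=0 \<or> q=2) then 1 else 0))) = bb m n p q"
proof -
  have p: "p = 0 \<or> p = 1 \<or> p = 2 \<or> p = 3" and q: "q = 0 \<or> q = 1 \<or> q = 2 \<or> q = 3" using assms(1,2) by auto
  have mn: "real (m + n - 2) = real m + real n - 2" using assms by (simp add: of_nat_diff)
  have mn': "complex_of_nat (m + n - 2) = of_nat m + of_nat n - 2" using assms by (simp add: of_nat_diff)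
  show ?thesis using p q assms(3) by (auto simp: bb_def dd_def mn mn' algebra_simps)
qed

theorem theorem2p8:
  fixes m n :: nat and e :: "nat set"
  assumes "m \<ge> 3" and "n \<ge> 2"
    and "e \<in> complete_bip3 m n"
    and "card (e \<inter> V1 m) = 2" and "card (e \<inter> V2 m n) = 1"
  shows "seidel_spectrum (m + n) (complete_bip3 m n - {e}) =
           replicate_mset (m - 3) (of_nat (2 * n) - 1)
         + replicate_mset (n - 2) (of_nat (2 * m) - 1)
         + proots (xi2 m n)"
proof -
  define N where "N = m + n"
  let ?E = "complete_bip3 m n - {e}"
  from assms(4) obtain a b where ab: "e \<inter> V1 m = {a,b}" "a \<noteq> b" by (auto simp: card_2_iff)
  from assms(5) obtain c where c: "e \<inter> V2 m n = {c}" by (auto simp: card_1_singleton_iff)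
  have eV: "e \<subseteq> V1 m \<union> V2 m n" using assms(3) by (simp add: complete_bip3_def)
  have e_eq: "e = {a,b,c}" using ab c eV by blast
  have a: "a < m" and b: "b < m" using ab(1) unfolding V1_def by auto
  have c1: "m \<le> c" and c2: "c < N" using c unfolding V2_def N_def by auto
  define cls where "cls i = (if i = a \<or> i = b then 0 else if i < m then 1 else if i = c then 2 else (3::nat))" for i
  have clsr: "cls i < 4" for i unfolding cls_def by auto
  have cls_le1: "cls i \<le> 1 \<longleftrightarrow> i < m" for i unfolding cls_def using a b by auto
  have cls_ge2: "2 \<le> cls i \<longleftrightarrow> m \<le> i" for i using cls_le1[of i] by linarith
  have cls_e: "i \<in> e \<longleftrightarrow> (cls i = 0 \<or> cls i = 2)" for i unfolding cls_def e_eq using a b c1 by auto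
  have cls2: "cls i = 2 \<Longrightarrow> i = c" for i unfolding cls_def by (auto split: if_splits)
  have entry: "complex_of_real (1 - 2 * real (codegree ?E i j)) = bb m n (cls i) (cls j)"
    if ij: "i < N" "j < N" "i \<noteq> j" for i j
  proof -
    have base: "codegree (complete_bip3 m n) i j = (if cls i \<le> 1 \<and> cls j \<le> 1 then n else if 2 \<le> cls i \<and> 2 \<le> cls j then m else m + n - 2)"
      using codeg_complete[of i j m n] ij unfolding N_def cls_le1 cls_ge2 by simp
    have "codegree ?E i j = codegree (complete_bip3 m n) i j - (if i \<in> e \<and> j \<in> e then 1 else 0)"
      by (rule codeg_minus[OF finite_bip3 assms(3)])
    also have "\<dots> = (if cls i \<le> 1 \<and> cls j \<le> 1 then n else if 2 \<le> cls i \<and> 2 \<le> cls j then m else m + n - 2)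
       - (if (cls i = 0 \<or> cls i = 2) \<and> (cls j = 0 \<or> cls j = 2) then 1 else 0)"
      unfolding base cls_e ..
    finally have "real (codegree ?E i j) = real (if cls i \<le> 1 \<and> cls j \<le> 1 then n else if 2 \<le> cls i \<and> 2 \<le> cls j then m else m + n - 2)
       - (if (cls i = 0 \<or> cls i = 2) \<and> (cls j = 0 \<or> cls j = 2) then 1 else 0)"
      using assms(1,2) by (auto simp: of_nat_diff)
    moreover have "\<not> (cls i = 2 \<and> cls j = 2)" using cls2 ij(3) by auto
    ultimately show ?thesis using entry_arith[OF clsr clsr _ assms(1,2), of i j] by simp
  qed
  let ?S = "map_mat complex_of_real (seidel_matrix N ?E)"
  have Smat: "?S = mat N N (\<lambda>(i,j). (if i = j then dd m n (cls i) else 0) + bb m n (cls i) (cls j))"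
  proof (rule eq_matI)
    fix i j assume i: "i < dim_row (mat N N (\<lambda>(i,j). (if i = j then dd m n (cls i) else 0) + bb m n (cls i) (cls j)))"
      and j: "j < dim_col (mat N N (\<lambda>(i,j). (if i = j then dd m n (cls i) else 0) + bb m n (cls i) (cls j)))"
    show "?S $$ (i,j) = mat N N (\<lambda>(i,j). (if i = j then dd m n (cls i) else 0) + bb m n (cls i) (cls j)) $$ (i,j)"
    proof (cases "i = j")
      case True
      then show ?thesis using i j by (simp add: seidel_matrix_def bb_def)
    next
      case False
      have "?S $$ (i,j) = complex_of_real (1 - 2 * real (codegree ?E i j))"
        using i j False by (simp add: seidel_matrix_def)
      also have "\<dots> = bb m n (cls i) (cls j)" using entry[of i j] i j False by simp
      finally show ?thesis using i j False by simp
    qed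
  qed (auto simp: seidel_matrix_def)
  have cards: "card {j. j < N \<and> cls j = k} = ss m n k" for k
  proof -
    have "k = 0 \<or> k = 1 \<or> k = 2 \<or> k = 3 \<or> k \<ge> 4" by auto
    moreover have "{j. j < N \<and> cls j = 0} = {a,b}" using a b unfolding cls_def N_def by auto
    moreover have "{j. j < N \<and> cls j = 1} = {0..<m} - {a,b}" unfolding cls_def N_def by auto
    moreover have "{j. j < N \<and> cls j = 2} = {c}" using a b c1 c2 unfolding cls_def by auto
    moreover have "{j. j < N \<and> cls j = 3} = {m..<N} - {c}" using a b unfolding cls_def N_def by auto
    moreover have "k \<ge> 4 \<Longrightarrow> {j. j < N \<and> cls j = k} = {}" using clsr by (auto simp: not_le[symmetric])
    ultimately show ?thesis using ab(2) a b c1 c2 unfolding ss_def N_def by (auto simp: card_Diff_subset)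
  qed
  define T where "T = [:-(2*of_nat n - 1),1:]^(m-3) * [:-(2*of_nat m - 1),1:]^(n-2) * (- xi2 m n)"
  have ev: "poly (char_poly ?S) x = poly T x" if x: "x \<notin> dd m n ` {..<4}" for x
  proof -
    have dx: "\<And>k. k < 4 \<Longrightarrow> x \<noteq> dd m n k" using x by auto
    have s: "\<And>k. k < 4 \<Longrightarrow> card {j. j < N \<and> cls j = k} \<ge> 1" unfolding cards using assms(1,2)
      by (auto simp: ss_def)
    have "poly (char_poly ?S) x = (\<Prod>k<4. (x - dd m n k) ^ (ss m n k - 1)) *
        det (mat 4 4 (\<lambda>(k,l). (if k = l then x - dd m n k else 0) - bb m n k l * of_nat (ss m n l)))"
      unfolding Smat using char_poly_block_eval[of N cls 4 x "dd m n" "bb m n", OF clsr dx s] unfolding cards by simp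
    also have "(\<Prod>k<4. (x - dd m n k) ^ (ss m n k - 1)) = (x - dd m n 0) * (x - dd m n 1) ^ (m - 3) * (x - dd m n 3) ^ (n - 2)"
      by (simp add: ss_def eval_nat_numeral lessThan_Suc)
    finally have "poly (char_poly ?S) x = (x - dd m n 1) ^ (m - 3) * (x - dd m n 3) ^ (n - 2) *
       ((x - dd m n 0) * det (mat 4 4 (\<lambda>(k,l). (if k = l then x - dd m n k else 0) - bb m n k l * of_nat (ss m n l))))"
      by (simp add: algebra_simps)
    also have "\<dots> = (x - dd m n 1) ^ (m - 3) * (x - dd m n 3) ^ (n - 2) * (- poly (xi2 m n) x)"
      using xi2_identity[of m n x] assms(1,2) by simp
    also have "\<dots> = poly T x"
    proof -
      have p1: "poly [:-(2*of_nat n - 1),1:] x = x - dd m n 1" by (simp add: dd_def)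
      have p3: "poly [:-(2*of_nat m - 1),1:] x = x - dd m n 3" by (simp add: dd_def)
      show ?thesis unfolding T_def poly_mult poly_power poly_minus p1 p3 by simp
    qed
    finally show ?thesis .
  qed
  have cpT: "char_poly ?S = T"
  proof (rule ccontr)
    assume ne: "char_poly ?S \<noteq> T"
    then have "char_poly ?S - T \<noteq> 0" by simp
    then have fin: "finite {x. poly (char_poly ?S - T) x = 0}" by (rule poly_roots_finite)
    have "UNIV - dd m n ` {..<4} \<subseteq> {x. poly (char_poly ?S - T) x = 0}" using ev by auto
    then have "finite (UNIV - dd m n ` {..<4})" using fin by (rule finite_subset)
    then have "finite (UNIV :: complex set)" by simp
    then show False using infinite_UNIV_char_0 by blast
  qed
  have "seidel_spectrum (m + n) ?E = proots T" unfolding seidel_spectrum_def N_def[symmetric] cpT ..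
  also have "\<dots> = replicate_mset (m - 3) (2*of_nat n - 1) + replicate_mset (n - 2) (2*of_nat m - 1) + proots (xi2 m n)"
    unfolding T_def using xi2_nz[of m n]
    by (simp add: proots_mult proots_power)
  finally show ?thesis by simp
qed

end
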